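(* Let $n\ge 1$ and let $\mathbf F$ be a family of subsets of $[n]$ such that $f(\mathbf F)\neq 0$, where $f(\mathbf F)=\sum_{\mathcal G} (-1)^{|\mathcal G|+1}$, the sum running over all nonempty subfamilies $\mathcal G\subseteq\mathbf F$ with $\bigcup_{G\in\mathcal G}G=[n]$. Then $\max\{r(\mathbf F),t(\mathbf F)\}\ge\sqrt n$.
   Context: $[n]=\{1,\dots,n\}$. The rank $r(\mathbf F)$ is the largest cardinality of a member of $\mathbf F$. $t(\mathbf F)$ is the largest $t$ for which there exist $F_1,\dots,F_t\in\mathbf F$ and elements $x_1,\dots,x_t$ with $x_i\in F_j$ iff $i=j$ (for all $1\le i,j\le t$). *)

theory Defs
  imports Complex_Main
begin

definition fam_f :: "nat \<Rightarrow> nat set set \<Rightarrow> int" where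
  "fam_f n F = (\<Sum>G\<in>{G. G \<subseteq> F \<and> G \<noteq> {} \<and> \<Union>G = {1..n}}. (-1) ^ (card G + 1))"

definition fam_rank :: "'a set set \<Rightarrow> nat" where
  "fam_rank F = Max (insert 0 (card ` F))"

definition fam_t :: "'a set set \<Rightarrow> nat" where
  "fam_t F = Max {t. \<exists>S :: nat \<Rightarrow> 'a set. \<exists>x :: nat \<Rightarrow> 'a.
      (\<forall>j\<in>{1..t}. S j \<in> F) \<and>
      (\<forall>i\<in>{1..t}. \<forall>j\<in>{1..t}. (x i \<in> S j \<longleftrightarrow> i = j))}"

end

theory Submission
  imports Defs
begin

lemma fam_t_ge:
  fixes F :: "nat set set" and S :: "nat \<Rightarrow> nat set" and x :: "nat \<Rightarrow> nat"
  assumes F: "F \<subseteq> Pow {1..n}"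
    and S: "\<forall>j\<in>{1..k}. S j \<in> F"
    and X: "\<forall>i\<in>{1..k}. \<forall>j\<in>{1..k}. (x i \<in> S j \<longleftrightarrow> i = j)"
  shows "k \<le> fam_t F"
proof -
  let ?T = "{t. \<exists>S :: nat \<Rightarrow> nat set. \<exists>x :: nat \<Rightarrow> nat.
      (\<forall>j\<in>{1..t}. S j \<in> F) \<and>
      (\<forall>i\<in>{1..t}. \<forall>j\<in>{1..t}. (x i \<in> S j \<longleftrightarrow> i = j))}"
  have bound: "t \<le> n" if "t \<in> ?T" for t
  proof -
    from that obtain S x where S: "\<forall>j\<in>{1..t}. S j \<in> F"
      and X: "\<forall>i\<in>{1..t}. \<forall>j\<in>{1..t}. (x i \<in> S j \<longleftrightarrow> i = j)" by blast
    have inj: "inj_on x {1..t}"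
      by (rule inj_onI) (metis X)
    have sub: "x ` {1..t} \<subseteq> {1..n}"
      using S X F by blast
    have "card (x ` {1..t}) \<le> card {1..n}"
      by (rule card_mono) (use sub in auto)
    then show ?thesis using card_image[OF inj] by simp
  qed
  have fin: "finite ?T"
    by (rule finite_subset[of _ "{..n}"]) (use bound in auto)
  have "k \<in> ?T" using S X by blast
  then show ?thesis unfolding fam_t_def using fin by (rule Max_ge[rotated])
qed

theorem lemma3p3:
  fixes n :: nat and F :: "nat set set"
  assumes "n \<ge> 1"
    and "F \<subseteq> Pow {1..n}"
    and "fam_f n F \<noteq> 0"
  shows "real (max (fam_rank F) (fam_t F)) \<ge> sqrt (real n)"
proof -
  have finF: "finite F" using assms(2) finite_subset by blast
  let ?C = "{G. G \<subseteq> F \<and> G \<noteq> {} \<and> \<Union>G = {1..n}}"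
  have "?C \<noteq> {}"
  proof
    assume "?C = {}"
    then have "fam_f n F = 0" unfolding fam_f_def by (simp only: sum.empty)
    then show False using assms(3) by simp
  qed
  then obtain G0 where "G0 \<in> ?C" by blast
  then have "\<exists>G. G \<in> ?C \<and> (\<forall>G'. G' \<in> ?C \<longrightarrow> card G \<le> card G')"
    by (rule ex_has_least_nat)
  then obtain G where GC: "G \<in> ?C" and Gmin: "\<forall>G'. G' \<in> ?C \<longrightarrow> card G \<le> card G'"
    by blast
  have GF: "G \<subseteq> F" and GU: "\<Union>G = {1..n}" using GC by auto
  have finG: "finite G" using GF finF finite_subset by blast
  have priv: "\<exists>y\<in>A. \<forall>B\<in>G. B \<noteq> A \<longrightarrow> y \<notin> B" if A: "A \<in> G" for A
  proof (rule ccontr)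
    assume "\<not> ?thesis"
    then have cov: "\<Union>(G - {A}) = {1..n}" using GU A by blast
    then have "G - {A} \<noteq> {}" using assms(1) by auto
    then have "G - {A} \<in> ?C" using cov GF by auto
    then have "card G \<le> card (G - {A})" using Gmin by blast
    moreover have "card (G - {A}) < card G" using A finG by (meson card_Diff1_less)
    ultimately show False by simp
  qed
  define p where "p A = (SOME y. y \<in> A \<and> (\<forall>B\<in>G. B \<noteq> A \<longrightarrow> y \<notin> B))" for A
  have pP: "p A \<in> A \<and> (\<forall>B\<in>G. B \<noteq> A \<longrightarrow> p A \<notin> B)" if "A \<in> G" for A
    unfolding p_def by (rule someI_ex) (use priv[OF that] in blast)
  define k where "k = card G"
  obtain h where h: "bij_betw h {1..k} G" unfolding k_def using ex_bij_betw_nat_finite_1[OF finG] by (elim exE)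
  have hin: "h j \<in> G" if "j \<in> {1..k}" for j using bij_betw_apply[OF h that] .
  have hinj: "inj_on h {1..k}" using bij_betw_imp_inj_on[OF h] .
  have X: "\<forall>i\<in>{1..k}. \<forall>j\<in>{1..k}. (p (h i) \<in> h j \<longleftrightarrow> i = j)"
  proof (intro ballI)
    fix i j assume i: "i \<in> {1..k}" and j: "j \<in> {1..k}"
    show "p (h i) \<in> h j \<longleftrightarrow> i = j"
    proof
      assume "p (h i) \<in> h j"
      moreover have "\<forall>B\<in>G. B \<noteq> h i \<longrightarrow> p (h i) \<notin> B" using pP[OF hin[OF i]] by (rule conjunct2)
      ultimately have "h j = h i" using hin[OF j] by blast
      then show "i = j" using inj_on_eq_iff[OF hinj j i] by simp
    next
      assume "i = j" then show "p (h i) \<in> h j" using pP[OF hin[OF i]] by simp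
    qed
  qed
  have kt: "k \<le> fam_t F"
    by (rule fam_t_ge[OF assms(2) _ X]) (use hin GF in blast)
  have rk: "card A \<le> fam_rank F" if "A \<in> F" for A
    unfolding fam_rank_def using finF that by (intro Max_ge) auto
  define m where "m = max (fam_rank F) (fam_t F)"
  have "n = card (\<Union>G)" using GU by simp
  also have "\<dots> \<le> sum card G" by (rule card_Union_le_sum_card)
  also have "\<dots> \<le> card G * fam_rank F"
    using sum_bounded_above[of G card "fam_rank F"] rk GF by auto
  also have "\<dots> \<le> m * m" unfolding m_def k_def[symmetric]
    using kt by (intro mult_mono) auto
  finally have "real n \<le> real m * real m" by (simp only: of_nat_mult[symmetric] of_nat_le_iff)
  then have "sqrt (real n) \<le> sqrt (real m * real m)" by (rule real_sqrt_le_mono)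
  also have "\<dots> = real m" using real_sqrt_mult_self[of "real m"] by simp
  finally show ?thesis unfolding m_def .
qed

end
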